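(* Let $\gamma_0>-1$ and $\Theta=(-1,+\infty)\times\mathbb{R}\times(0,+\infty)$. For $B\subset\Theta$ define $\ell_B(x)=\sup_{\theta\in B}\ell_\theta(x)$, $x\in\mathbb{R}$. Let $\theta\in\Theta$ and let $B(\theta,\varepsilon)$ denote the open ball in $\Theta$ with center $\theta$ and radius $\varepsilon>0$. Then \[ \lim_{\varepsilon\to0}G_{\gamma_0}[\ell_{B(\theta,\varepsilon)}]=G_{\gamma_0}[\ell_\theta], \] where $G_{\gamma_0}[f]=\int f\,dG_{\gamma_0}$.
   Context: For $\gamma\in\mathbb{R}$, $G_\gamma$ denotes the generalized extreme value distribution with distribution function $F_\gamma(x)=\exp(-(1+\gamma x)^{-1/\gamma})$ for $1+\gamma x>0$ (interpreted as $\exp(-e^{-x})$ when $\gamma=0$). The GEV log-likelihood is $\ell_\gamma(x)=-(1+1/\gamma)\log(1+\gamma x)-(1+\gamma x)^{-1/\gamma}$ if $1+\gamma x>0$ and $-\infty$ otherwise, with $\ell_0(x)=-x-e^{-x}$; for $\theta=(\gamma,\mu,\sigma)$ with $\sigma>0$, $\ell_\theta(x)=\ell_\gamma\big(\frac{x-\mu}{\sigma}\big)-\log\sigma$. *)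

theory Defs
  imports "HOL-Analysis.Analysis"
begin

definition gev_cdf :: "real \<Rightarrow> real \<Rightarrow> real" where
  "gev_cdf g x =
     (if g = 0 then exp (- exp (- x))
      else if 1 + g * x > 0 then exp (- ((1 + g * x) powr (- 1 / g)))
      else if g > 0 then 0 else 1)"

definition GEV :: "real \<Rightarrow> real measure" where
  "GEV g = interval_measure (gev_cdf g)"

definition gev_ll :: "real \<Rightarrow> real \<Rightarrow> ereal" where
  "gev_ll g x =
     (if g = 0 then ereal (- x - exp (- x))
      else if 1 + g * x > 0 then
        ereal (- (1 + 1 / g) * ln (1 + g * x) - (1 + g * x) powr (- 1 / g))
      else - \<infinity>)"

definition ll :: "real \<times> real \<times> real \<Rightarrow> real \<Rightarrow> ereal" where
  "ll th x = (case th of (g, m, s) \<Rightarrow> gev_ll g ((x - m) / s) - ereal (ln s))"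

definition Theta :: "(real \<times> real \<times> real) set" where
  "Theta = {(g, m, s). g > -1 \<and> s > 0}"

definition llB :: "(real \<times> real \<times> real) set \<Rightarrow> real \<Rightarrow> ereal" where
  "llB B x = (SUP th\<in>B. ll th x)"

definition ereal_integral :: "real measure \<Rightarrow> (real \<Rightarrow> ereal) \<Rightarrow> ereal" where
  "ereal_integral M f =
     enn2ereal (\<integral>\<^sup>+ x. e2ennreal (f x) \<partial>M) - enn2ereal (\<integral>\<^sup>+ x. e2ennreal (- f x) \<partial>M)"

end

theory Submission
  imports Defs
begin

definition phi :: "real \<Rightarrow> real" where
  "phi t = (if t = 0 then 1 else ln (1 + t) / t)"

definition hh :: "real \<Rightarrow> real \<Rightarrow> real" where
  "hh g z = z * phi (g * z)"

lemma ln_hh: assumes "1 + g * z > 0" shows "ln (1 + g * z) = g * hh g z"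
  using assms by (auto simp: hh_def phi_def)

lemma hh_zero[simp]: "hh 0 z = z"
  by (simp add: hh_def phi_def)

lemma isCont_phi: assumes "t > -1" shows "isCont phi t"
proof (cases "t = 0")
  case True
  have "DERIV ln (1::real) :> 1" using DERIV_ln[of 1] by simp
  then have "((\<lambda>h::real. (ln (1 + h) - ln 1) / h) \<longlongrightarrow> 1) (at 0)"
    by (simp add: DERIV_def)
  then have "((\<lambda>h::real. ln (1 + h) / h) \<longlongrightarrow> 1) (at 0)" by simp
  then have "(phi \<longlongrightarrow> 1) (at 0)"
    by (rule tendsto_cong[THEN iffD1, rotated]) (auto simp: eventually_at_filter phi_def)
  then show ?thesis using True by (simp add: isCont_def phi_def)
next
  case False
  have "isCont (\<lambda>t. ln (1 + t) / t) t"
    using False assms by (auto intro!: continuous_intros)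
  moreover have "eventually (\<lambda>x. phi x = ln (1 + x) / x) (nhds t)"
  proof -
    have "open (-{0::real})" by auto
    then show ?thesis using False
      by (auto simp: eventually_nhds phi_def intro!: exI[of _ "-{0}"])
  qed
  ultimately show ?thesis using isCont_cong[of phi "\<lambda>t. ln (1 + t) / t" t] by simp
qed

lemma gev_ll_alt: "gev_ll g z = (if 1 + g * z > 0 then
   ereal ((1 + g) * (- hh g z) - exp (- hh g z)) else - \<infinity>)"
proof (cases "g = 0")
  case True then show ?thesis by (simp add: gev_ll_def)
next
  case False
  show ?thesis
  proof (cases "1 + g * z > 0")
    case True
    have l: "ln (1 + g * z) = g * hh g z" using ln_hh[OF True] .
    have "(1 + g * z) powr (- 1 / g) = exp (- hh g z)"
      using True False by (simp add: powr_def l)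
    moreover have "- (1 + 1 / g) * ln (1 + g * z) = (1 + g) * (- hh g z)"
      using False by (simp add: l field_simps)
    ultimately show ?thesis using True False by (simp add: gev_ll_def)
  qed (use False in \<open>simp add: gev_ll_def\<close>)
qed

lemma gev_cdf_alt: "gev_cdf g x = (if 1 + g * x > 0 then exp (- exp (- hh g x))
   else if g > 0 then 0 else 1)"
proof (cases "g = 0")
  case True then show ?thesis by (simp add: gev_cdf_def)
next
  case False
  show ?thesis
  proof (cases "1 + g * x > 0")
    case True
    have l: "ln (1 + g * x) = g * hh g x" using ln_hh[OF True] .
    have "(1 + g * x) powr (- 1 / g) = exp (- hh g x)"
      using True False by (simp add: powr_def l)
    then show ?thesis using True False by (simp add: gev_cdf_def)
  qed (use False in \<open>simp add: gev_cdf_def\<close>)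
qed

lemma tendsto_hh:
  assumes "1 + g * z > 0" and f: "(f \<longlongrightarrow> g) F" and h: "(h \<longlongrightarrow> z) F"
  shows "((\<lambda>x. hh (f x) (h x)) \<longlongrightarrow> hh g z) F"
proof -
  have "isCont phi (g * z)" using assms by (intro isCont_phi) auto
  then have "((\<lambda>x. phi (f x * h x)) \<longlongrightarrow> phi (g * z)) F"
    by (rule isCont_tendsto_compose) (intro tendsto_mult f h)
  then show ?thesis unfolding hh_def by (intro tendsto_mult h)
qed

lemma ya_bound: fixes a y :: real assumes "a > 0" shows "a * y - exp y \<le> a^2 / 2"
proof (cases "y \<le> 0")
  case True
  then have "a * y \<le> 0" using assms by (simp add: mult_nonneg_nonpos less_imp_le)
  moreover have "exp y > 0" by simp
  moreover have "a^2/2 \<ge> 0" by simp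
  ultimately show ?thesis by linarith
next
  case False
  then have "1 + y + y^2/2 \<le> exp y" by (intro exp_lower_Taylor_quadratic) auto
  moreover have "(y - a)^2 \<ge> 0" by simp
  ultimately show ?thesis using False by (simp add: power2_eq_square algebra_simps)
qed

lemma gev_ll_bound: assumes "g > -1" shows "gev_ll g z \<le> ereal ((1 + g)^2 / 2)"
  using ya_bound[of "1+g" "- hh g z"] assms by (simp add: gev_ll_alt)

lemma tendsto_gev_ll:
  assumes g: "g > -1" and f: "(f \<longlongrightarrow> g) F" and h: "(h \<longlongrightarrow> z) F"
  shows "((\<lambda>x. gev_ll (f x) (h x)) \<longlongrightarrow> gev_ll g z) F"
proof -
  have t: "((\<lambda>x. 1 + f x * h x) \<longlongrightarrow> 1 + g * z) F"
    by (intro tendsto_intros f h)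
  consider "1 + g * z > 0" | "1 + g * z < 0" | "1 + g * z = 0" by linarith
  then show ?thesis
  proof cases
    case 1
    have ev: "eventually (\<lambda>x. 1 + f x * h x > 0) F"
      using order_tendstoD(1)[OF t 1] .
    have "((\<lambda>x. ereal ((1 + f x) * (- hh (f x) (h x)) - exp (- hh (f x) (h x))))
        \<longlongrightarrow> ereal ((1 + g) * (- hh g z) - exp (- hh g z))) F" (is ?T)
      by (intro tendsto_intros f tendsto_hh[OF 1 f h])
    moreover have E: "eventually (\<lambda>x. ereal ((1 + f x) * (- hh (f x) (h x)) - exp (- hh (f x) (h x)))
        = gev_ll (f x) (h x)) F"
      using ev by (auto elim!: eventually_mono simp: gev_ll_alt)
    ultimately have "((\<lambda>x. gev_ll (f x) (h x))
        \<longlongrightarrow> ereal ((1 + g) * (- hh g z) - exp (- hh g z))) F"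
      using tendsto_cong[OF E, THEN iffD1] by blast
    then show ?thesis using 1 by (simp add: gev_ll_alt)
  next
    case 2
    have ev: "eventually (\<lambda>x. 1 + f x * h x < 0) F"
      using order_tendstoD(2)[OF t 2] .
    show ?thesis
      using 2 by (intro tendsto_eventually)
        (use ev in \<open>auto elim!: eventually_mono simp: gev_ll_alt\<close>)
  next
    case 3
    then have gnz: "g \<noteq> 0" by auto
    have val: "gev_ll g z = - \<infinity>" using 3 by (simp add: gev_ll_alt)
    show ?thesis unfolding val tendsto_MInfty
    proof
      fix r :: real
      show "eventually (\<lambda>x. gev_ll (f x) (h x) < ereal r) F"
      proof (cases "g > 0")
        case True
        define A where "A = 1 + 2 * g"
        define Y where "Y = 2 * A + 2 * \<bar>r\<bar> + 2"
        define d where "d = exp (- 2 * g * Y)"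
        have "d > 0" by (simp add: d_def)
        have e1: "eventually (\<lambda>x. f x > g / 2) F" using order_tendstoD(1)[OF f, of "g/2"] True by simp
        have e2: "eventually (\<lambda>x. f x < 2 * g) F" using order_tendstoD(2)[OF f, of "2*g"] True by simp
        have e3: "eventually (\<lambda>x. 1 + f x * h x < d) F" using order_tendstoD(2)[OF t, of d] 3 \<open>d > 0\<close> by simp
        show ?thesis using e1 e2 e3
        proof eventually_elim
          case (elim x)
          show ?case
          proof (cases "1 + f x * h x > 0")
            case False then show ?thesis by (simp add: gev_ll_alt)
          next
            case tp: True
            define y where "y = - hh (f x) (h x)"
            have "ln (1 + f x * h x) < ln d" using tp elim by simp
            then have "f x * hh (f x) (h x) < - 2 * g * Y"
              using ln_hh[OF tp] by (simp add: d_def)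
            then have yg: "y * f x > 2 * g * Y" by (simp add: y_def algebra_simps)
            have fx: "f x > 0" "f x < 2 * g" using elim True by auto
            have "Y > 0" using True by (simp add: Y_def A_def)
            then have "2 * g * Y > 0" using True by simp
            then have "y * f x > 0" using yg by linarith
            then have "y > 0" using fx by (simp add: zero_less_mult_iff)
            have "y * (2 * g) > y * f x" using \<open>y > 0\<close> fx by simp
            then have "y * (2 * g) > 2 * g * Y" using yg by linarith
            then have yY: "y > Y" using True by (simp add: algebra_simps)
            have q: "1 + y + y^2/2 \<le> exp y" using \<open>y > 0\<close> by (intro exp_lower_Taylor_quadratic) auto
            have "(1 + f x) * y \<le> A * y" using fx \<open>y > 0\<close> by (simp add: A_def)
            moreover have "A * y - y^2 / 2 < r"
            proof -
              have "y / 2 - A \<ge> \<bar>r\<bar> + 1" using yY by (simp add: Y_def)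
              then have "y * (y / 2 - A) \<ge> y * (\<bar>r\<bar> + 1)" using \<open>y > 0\<close> by simp
              moreover have "y * (\<bar>r\<bar> + 1) > \<bar>r\<bar>"
              proof -
                have "y > 1" using yY by (simp add: Y_def A_def) (smt (verit) True)
                then have "y * (\<bar>r\<bar> + 1) \<ge> 1 * (\<bar>r\<bar> + 1)"
                  by (intro mult_right_mono) auto
                then show ?thesis by simp
              qed
              ultimately show ?thesis by (simp add: power2_eq_square algebra_simps)
            qed
            ultimately have "(1 + f x) * y - exp y < r" using q \<open>y > 0\<close> by linarith
            then show ?thesis using tp by (simp add: gev_ll_alt y_def)
          qed
        qed
      next
        case False
        then have gneg: "g < 0" using gnz by auto
        define g1 where "g1 = (g - 1) / 2"
        define c where "c = 1 + g1"
        have c: "c > 0" "g1 < g" "g1 > -1" using g gneg by (auto simp: c_def g1_def field_simps)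
        define U where "U = \<bar>r\<bar> / c + 1"
        define d where "d = exp (- U)"
        have "d > 0" by (simp add: d_def)
        have "U > 0" using c by (simp add: U_def add_nonneg_pos)
        have e1: "eventually (\<lambda>x. f x > g1) F" using order_tendstoD(1)[OF f c(2)] .
        have e2: "eventually (\<lambda>x. f x < g / 2) F" using order_tendstoD(2)[OF f, of "g/2"] gneg by simp
        have e3: "eventually (\<lambda>x. 1 + f x * h x < d) F" using order_tendstoD(2)[OF t, of d] 3 \<open>d > 0\<close> by simp
        show ?thesis using e1 e2 e3
        proof eventually_elim
          case (elim x)
          show ?case
          proof (cases "1 + f x * h x > 0")
            case False then show ?thesis by (simp add: gev_ll_alt)
          next
            case tp: True
            define y where "y = - hh (f x) (h x)"
            have "ln (1 + f x * h x) < ln d" using tp elim by simp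
            then have "f x * hh (f x) (h x) < - U"
              using ln_hh[OF tp] by (simp add: d_def)
            then have yg: "y * f x > U" by (simp add: y_def algebra_simps)
            have fx: "f x < 0" "f x > -1" "f x > g1" using elim gneg c by auto
            have "y * f x > 0" using yg \<open>U > 0\<close> by linarith
            then have "y < 0" using fx by (simp add: zero_less_mult_iff)
            have "y * f x \<le> y * (-1)" using \<open>y < 0\<close> fx
              by (intro mult_left_mono_neg) auto
            then have "y * f x \<le> - y" by simp
            then have yU: "y < - U" using yg by linarith
            have "(1 + f x) * y \<le> c * y" using fx \<open>y < 0\<close> by (simp add: c_def mult_right_mono_neg)
            also have "c * y < c * (- U)" using yU c by (intro mult_strict_left_mono) auto
            also have "c * (- U) = - \<bar>r\<bar> - c" using c by (simp add: U_def field_simps)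
            finally have "(1 + f x) * y < r" using c by linarith
            moreover have "exp y > 0" by simp
            ultimately have "(1 + f x) * y - exp y < r" by linarith
            then show ?thesis using tp by (simp add: gev_ll_alt y_def)
          qed
        qed
      qed
    qed
  qed
qed

lemma ll_eq: "ll th x = gev_ll (fst th) ((x - fst (snd th)) / snd (snd th)) - ereal (ln (snd (snd th)))"
  by (cases th) (simp add: ll_def)

lemma Theta_iff: "th \<in> Theta \<longleftrightarrow> fst th > -1 \<and> snd (snd th) > 0"
  by (cases th) (auto simp: Theta_def)

lemma tendsto_ll:
  assumes th: "th \<in> Theta" and T: "(T \<longlongrightarrow> th) F" and X: "(X \<longlongrightarrow> x) F"
  shows "((\<lambda>i. ll (T i) (X i)) \<longlongrightarrow> ll th x) F"
proof -
  have g: "fst th > -1" and s: "snd (snd th) > 0" using th by (auto simp: Theta_iff)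
  have a: "((\<lambda>i. gev_ll (fst (T i)) ((X i - fst (snd (T i))) / snd (snd (T i))))
      \<longlongrightarrow> gev_ll (fst th) ((x - fst (snd th)) / snd (snd th))) F"
    using s by (intro tendsto_gev_ll g tendsto_intros T X) auto
  have b: "((\<lambda>i. ereal (ln (snd (snd (T i))))) \<longlongrightarrow> ereal (ln (snd (snd th)))) F"
    using s by (intro tendsto_intros T) auto
  show ?thesis unfolding ll_eq
    by (rule tendsto_diff_ereal_general[OF a b]) auto
qed

lemma ll_bound: assumes "th \<in> Theta"
  shows "ll th x \<le> ereal ((1 + fst th)^2 / 2 - ln (snd (snd th)))"
proof -
  have "gev_ll (fst th) ((x - fst (snd th)) / snd (snd th)) \<le> ereal ((1 + fst th)^2 / 2)"
    using assms by (intro gev_ll_bound) (auto simp: Theta_iff)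
  then show ?thesis unfolding ll_eq
    by (cases "gev_ll (fst th) ((x - fst (snd th)) / snd (snd th))") auto
qed

lemma open_ll_greater: assumes "th \<in> Theta" shows "open {x. ereal y < ll th x}"
proof -
  have "continuous_on UNIV (ll th)"
  proof (intro continuous_at_imp_continuous_on ballI)
    fix x :: real
    show "isCont (ll th) x" unfolding isCont_def
      using tendsto_ll[OF assms tendsto_const[of th] tendsto_ident_at[of x UNIV]] by simp
  qed
  then show ?thesis by (intro open_Collect_less continuous_on_const)
qed

lemma llB_measurable:
  assumes "B \<subseteq> Theta" and M: "sets M = sets borel"
  shows "llB B \<in> borel_measurable M"
proof (rule borel_measurableI_greater)
  fix y :: ereal
  have sp: "space M = UNIV" using sets_eq_imp_space_eq[OF M] by simp
  have "{x. y < llB B x} = (\<Union>th\<in>B. {x. y < ll th x})"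
    by (auto simp: llB_def less_SUP_iff)
  moreover have "open (\<Union>th\<in>B. {x. y < ll th x})"
  proof (intro open_UN ballI)
    fix th assume th: "th \<in> B"
    show "open {x. y < ll th x}"
    proof (cases y)
      case (real r) then show ?thesis using open_ll_greater[of th r] th assms by auto
    next
      case PInf then show ?thesis by simp
    next
      case MInf
      have "{x. y < ll th x} = (\<Union>n::nat. {x. ereal (- real n) < ll th x})"
      proof safe
        fix x assume "y < ll th x"
        have "ll th x > - \<infinity>" using MInf \<open>y < ll th x\<close> by simp
        moreover have "ll th x < \<infinity>" using ll_bound[of th x] th assms by auto
        ultimately obtain r where r: "ll th x = ereal r" by (cases "ll th x") auto
        obtain n :: nat where "real n > - r" using reals_Archimedean2 by blast
        then show "x \<in> (\<Union>n::nat. {x. ereal (- real n) < ll th x})" using r by (auto intro!: exI[of _ n])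
      qed (use MInf in auto)
      moreover have "th \<in> Theta" using th assms by auto
      ultimately show ?thesis by (auto intro!: open_UN open_ll_greater)
    qed
  qed
  ultimately show "{x \<in> space M. y < llB B x} \<in> sets M"
    using M sp by (simp add: borel_open)
qed

lemma ll_measurable:
  assumes "th \<in> Theta" and M: "sets M = sets borel"
  shows "ll th \<in> borel_measurable M"
proof -
  have "llB {th} = ll th" by (auto simp: llB_def)
  then show ?thesis using llB_measurable[of "{th}" M] assms by simp
qed

lemma gev_cdf_bounds: "0 \<le> gev_cdf g x" "gev_cdf g x \<le> 1"
  by (auto simp: gev_cdf_alt)

lemma hh_mono: assumes "x \<le> x'" "1 + g * x > 0" "1 + g * x' > 0"
  shows "hh g x \<le> hh g x'"
proof -
  consider "g = 0" | "g > 0" | "g < 0" by linarith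
  then show ?thesis
  proof cases
    case 1 then show ?thesis using assms by simp
  next
    case 2
    have "ln (1 + g * x) \<le> ln (1 + g * x')" using assms 2 by (simp add: mult_left_mono)
    then have "g * hh g x \<le> g * hh g x'" using ln_hh assms by simp
    then show ?thesis using 2 by simp
  next
    case 3
    have "ln (1 + g * x') \<le> ln (1 + g * x)" using assms 3 by (simp add: mult_left_mono_neg)
    then have "g * hh g x' \<le> g * hh g x" using ln_hh assms by simp
    then show ?thesis using 3 by simp
  qed
qed

lemma gev_cdf_mono: assumes "x \<le> x'" shows "gev_cdf g x \<le> gev_cdf g x'"
proof -
  consider "g = 0" | "g > 0" | "g < 0" by linarith
  then show ?thesis
  proof cases
    case 1 then show ?thesis using assms hh_mono[OF assms, of 0] by (simp add: gev_cdf_alt)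
  next
    case 2
    show ?thesis
    proof (cases "1 + g * x > 0")
      case True
      then have "1 + g * x' > 0" using assms 2 by (smt (verit) mult_left_mono)
      then show ?thesis using True hh_mono[OF assms True] by (simp add: gev_cdf_alt)
    next
      case False then show ?thesis using 2 gev_cdf_bounds[of g x'] by (simp add: gev_cdf_alt)
    qed
  next
    case 3
    show ?thesis
    proof (cases "1 + g * x' > 0")
      case True
      then have "1 + g * x > 0" using assms 3 by (smt (verit) mult_left_mono_neg)
      then show ?thesis using True hh_mono[OF assms _ True] by (simp add: gev_cdf_alt)
    next
      case False then show ?thesis using 3 gev_cdf_bounds[of g x] by (simp add: gev_cdf_alt)
    qed
  qed
qed

lemma gev_cdf_right_cont: "continuous (at_right a) (gev_cdf g)"
  unfolding continuous_within
proof -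
  have t: "((\<lambda>x. 1 + g * x) \<longlongrightarrow> 1 + g * a) (at_right a)"
    by (intro tendsto_intros)
  consider "1 + g * a > 0" | "1 + g * a < 0" | "1 + g * a = 0" by linarith
  then show "(gev_cdf g \<longlongrightarrow> gev_cdf g a) (at_right a)"
  proof cases
    case 1
    have ev: "eventually (\<lambda>x. 1 + g * x > 0) (at_right a)" using order_tendstoD(1)[OF t 1] .
    have P: "((\<lambda>x. exp (- exp (- hh g x))) \<longlongrightarrow> exp (- exp (- hh g a))) (at_right a)"
      by (intro tendsto_intros tendsto_hh[OF 1] tendsto_ident_at)
    moreover have E: "eventually (\<lambda>x. exp (- exp (- hh g x)) = gev_cdf g x) (at_right a)"
      using ev by eventually_elim (simp add: gev_cdf_alt)
    have val: "gev_cdf g a = exp (- exp (- hh g a))" using 1 by (simp add: gev_cdf_alt)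
    show ?thesis unfolding val by (rule tendsto_cong[OF E, THEN iffD1, OF P])
  next
    case 2
    have ev: "eventually (\<lambda>x. 1 + g * x < 0) (at_right a)" using order_tendstoD(2)[OF t 2] .
    show ?thesis
      by (rule tendsto_eventually) (use ev 2 in \<open>auto elim!: eventually_mono simp: gev_cdf_alt\<close>)
  next
    case 3
    then have "g \<noteq> 0" by auto
    show ?thesis
    proof (cases "g > 0")
      case False
      then have gn: "g < 0" using \<open>g \<noteq> 0\<close> by auto
      have ev: "eventually (\<lambda>x. x > a) (at_right a)" by (simp add: eventually_at_right_less)
      show ?thesis
      proof (rule tendsto_eventually)
        show "eventually (\<lambda>x. gev_cdf g x = gev_cdf g a) (at_right a)"
          using ev
        proof eventually_elim
          case (elim x)
          then have "g * x < g * a" using gn by simp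
          then have "\<not> 1 + g * x > 0" using 3 by linarith
          then show ?case using 3 gn by (simp add: gev_cdf_alt)
        qed
      qed
    next
      case True
      have val: "gev_cdf g a = 0" using 3 True by (simp add: gev_cdf_alt)
      show ?thesis unfolding val
      proof (rule order_tendstoI)
        fix y :: real assume "y < 0"
        then show "eventually (\<lambda>x. y < gev_cdf g x) (at_right a)"
          using gev_cdf_bounds(1)[of g] by (auto intro: always_eventually less_le_trans)
      next
        fix e :: real assume "e > 0"
        define K where "K = ln (\<bar>ln e\<bar> + 1)"
        define d where "d = exp (- g * K)"
        have "d > 0" by (simp add: d_def)
        have ev1: "eventually (\<lambda>x. x > a) (at_right a)" by (simp add: eventually_at_right_less)
        have ev2: "eventually (\<lambda>x. 1 + g * x < d) (at_right a)"
          using order_tendstoD(2)[OF t, of d] 3 \<open>d > 0\<close> by simp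
        show "eventually (\<lambda>x. gev_cdf g x < e) (at_right a)" using ev1 ev2
        proof eventually_elim
          case (elim x)
          have tp: "1 + g * x > 0" using elim 3 True
            by (smt (verit) mult_strict_left_mono)
          have "ln (1 + g * x) < ln d" using tp elim by simp
          then have "g * hh g x < - g * K" using ln_hh[OF tp] by (simp add: d_def)
          then have "g * (- hh g x) > g * K" by simp
          then have w: "- hh g x > K" using True mult_less_cancel_left_pos[of g K "- hh g x"] by simp
          have "exp (- hh g x) > exp K" using w by simp
          also have "exp K = \<bar>ln e\<bar> + 1" by (simp add: K_def add_pos_nonneg)
          finally have "- exp (- hh g x) < ln e" by linarith
          then have "exp (- exp (- hh g x)) < exp (ln e)" by simp
          then show ?case using tp \<open>e > 0\<close> by (simp add: gev_cdf_alt)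
        qed
      qed
    qed
  qed
qed

lemma UN_Ioc_eq_UNIV': "(\<Union>n. { -real n <.. real n}) = UNIV"
  by auto
     (metis le_less_trans minus_minus neg_less_iff_less not_le real_arch_simple
            of_nat_0_le_iff reals_Archimedean2)

lemma GEV_UNIV: "emeasure (GEV g) UNIV \<le> 1"
proof -
  let ?F = "GEV g"
  have "emeasure ?F UNIV = emeasure ?F (\<Union>i::nat. {- real i<..real i})"
    by (simp add: UN_Ioc_eq_UNIV')
  also have "\<dots> = (SUP i. emeasure ?F {- real i<..real i})"
    by (rule SUP_emeasure_incseq[symmetric]) (auto simp: incseq_def GEV_def)
  also have "\<dots> = (SUP i::nat. ennreal (gev_cdf g (real i) - gev_cdf g (- real i)))"
    unfolding GEV_def
    by (subst emeasure_interval_measure_Ioc) (auto simp: gev_cdf_mono gev_cdf_right_cont)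
  also have "\<dots> \<le> 1"
  proof (rule SUP_least)
    fix i :: nat
    have "gev_cdf g (real i) - gev_cdf g (- real i) \<le> 1"
      using gev_cdf_bounds[of g] by (smt (verit))
    then show "ennreal (gev_cdf g (real i) - gev_cdf g (- real i)) \<le> 1"
      by (simp add: ennreal_le_1)
  qed
  finally show ?thesis .
qed

lemma sets_GEV: "sets (GEV g) = sets borel" by (simp add: GEV_def)
lemma space_GEV: "space (GEV g) = UNIV" by (simp add: GEV_def)

lemma llB_mono: assumes "e \<le> e'" shows "llB (ball th e \<inter> Theta) x \<le> llB (ball th e' \<inter> Theta) x"
  unfolding llB_def using subset_ball[OF assms] by (intro SUP_subset_mono) auto

lemma llB_lower: assumes "e > 0" "th \<in> Theta" shows "ll th x \<le> llB (ball th e \<inter> Theta) x"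
  unfolding llB_def using assms by (intro SUP_upper) auto

lemma llB_upper_bound:
  assumes th: "th \<in> Theta" and e: "e \<le> min 1 (snd (snd th) / 2)"
  shows "llB (ball th e \<inter> Theta) x \<le> ereal ((2 + fst th)^2 / 2 - ln (snd (snd th) / 2))"
  unfolding llB_def
proof (rule SUP_least)
  fix t assume t: "t \<in> ball th e \<inter> Theta"
  have d: "dist th t < e" using t by auto
  have "dist (fst th) (fst t) \<le> dist th t" by (rule dist_fst_le)
  then have g1: "fst t < fst th + 1" using d e by (auto simp: dist_real_def)
  have "dist (snd (snd th)) (snd (snd t)) \<le> dist (snd th) (snd t)" by (rule dist_snd_le)
  also have "\<dots> \<le> dist th t" by (rule dist_snd_le)
  finally have s1: "snd (snd t) > snd (snd th) / 2" using d e by (auto simp: dist_real_def)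
  have tT: "fst t > -1" "snd (snd t) > 0" using t by (auto simp: Theta_iff)
  have thT: "snd (snd th) > 0" using th by (auto simp: Theta_iff)
  have "(1 + fst t)^2 \<le> (2 + fst th)^2"
    using g1 tT by (intro power_mono) auto
  moreover have "ln (snd (snd th) / 2) \<le> ln (snd (snd t))"
    using s1 thT by simp
  ultimately have "(1 + fst t)^2 / 2 - ln (snd (snd t)) \<le> (2 + fst th)^2 / 2 - ln (snd (snd th) / 2)"
    by (simp add: divide_right_mono)
  then show "ll t x \<le> ereal ((2 + fst th)^2 / 2 - ln (snd (snd th) / 2))"
    using ll_bound[of t x] t by (auto intro: order_trans)
qed

lemma llB_pointwise:
  assumes th: "th \<in> Theta"
  shows "((\<lambda>e. llB (ball th e \<inter> Theta) x) \<longlongrightarrow> ll th x) (at_right 0)"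
proof (rule order_tendstoI)
  fix a assume "a < ll th x"
  have "eventually (\<lambda>e. e > (0::real)) (at_right 0)" by (simp add: eventually_at_right_less)
  then show "eventually (\<lambda>e. a < llB (ball th e \<inter> Theta) x) (at_right 0)"
    by eventually_elim (use \<open>a < ll th x\<close> llB_lower th in \<open>blast intro: less_le_trans\<close>)
next
  fix a assume "ll th x < a"
  then obtain a' where a': "ll th x < a'" "a' < a" using dense by blast
  have "((\<lambda>t. ll t x) \<longlongrightarrow> ll th x) (nhds th)"
    by (rule tendsto_ll[OF th filterlim_ident tendsto_const])
  from order_tendstoD(2)[OF this a'(1)]
  obtain d where d: "d > 0" "\<And>t. dist t th < d \<Longrightarrow> ll t x < a'"
    unfolding eventually_nhds_metric by blast
  have "eventually (\<lambda>e. e < d) (at_right (0::real))"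
    using order_tendstoD(2)[OF tendsto_ident_at[of "0::real" "{0<..}"], of d] d by simp
  then show "eventually (\<lambda>e. llB (ball th e \<inter> Theta) x < a) (at_right 0)"
  proof eventually_elim
    case (elim e)
    have "llB (ball th e \<inter> Theta) x \<le> a'"
      unfolding llB_def
    proof (rule SUP_least)
      fix t assume "t \<in> ball th e \<inter> Theta"
      then have "dist t th < d" using elim by (auto simp: dist_commute)
      then show "ll t x \<le> a'" using d(2)[of t] by (rule_tac less_imp_le) blast
    qed
    then show ?case using a' by auto
  qed
qed

theorem lemma3p2:
  fixes g0 :: real and th :: "real \<times> real \<times> real"
  assumes "g0 > -1" and "th \<in> Theta"
  shows "((\<lambda>e. ereal_integral (GEV g0) (llB (ball th e \<inter> Theta)))
           \<longlongrightarrow> ereal_integral (GEV g0) (ll th)) (at_right 0)"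
proof -
  note th = assms(2)
  define M where "M = GEV g0"
  define f where "f e = llB (ball th e \<inter> Theta)" for e
  define e0 where "e0 = min 1 (snd (snd th) / 2)"
  define C where "C = (2 + fst th)^2 / 2 - ln (snd (snd th) / 2)"
  have e0: "e0 > 0" using th by (auto simp: e0_def Theta_iff)
  have sM: "sets M = sets borel" by (simp add: M_def sets_GEV)
  have spM: "space M = UNIV" by (simp add: M_def space_GEV)
  have fin: "emeasure M UNIV \<le> 1" by (simp add: M_def GEV_UNIV)
  have meas_f: "f e \<in> borel_measurable M" for e
    unfolding f_def by (rule llB_measurable[OF _ sM]) auto
  have meas_ll: "ll th \<in> borel_measurable M" by (rule ll_measurable[OF th sM])
  have bound: "f e x \<le> ereal C" if "e \<le> e0" for e x
    unfolding f_def C_def using llB_upper_bound[OF th, of e x] that by (simp add: e0_def)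
  have fmono: "f e x \<le> f e' x" if "e \<le> e'" for e e' x
    unfolding f_def using llB_mono[OF that] .
  have flow: "ll th x \<le> f e x" if "e > 0" for e x
    unfolding f_def using llB_lower[OF that th] .
  have ptw: "((\<lambda>e. f e x) \<longlongrightarrow> ll th x) (at_right 0)" for x
    unfolding f_def by (rule llB_pointwise[OF th])
  have intC: "(\<integral>\<^sup>+ x. ennreal C \<partial>M) < \<infinity>"
  proof -
    have "(\<integral>\<^sup>+ x. ennreal C \<partial>M) = ennreal C * emeasure M UNIV" by (simp add: spM)
    also have "\<dots> \<le> ennreal C * 1" using fin by (intro mult_left_mono) auto
    finally have "(\<integral>\<^sup>+ x. ennreal C \<partial>M) \<le> ennreal C" by simp
    then show ?thesis using ennreal_less_top[of C] by (simp add: le_less_trans)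
  qed
  have P0fin: "(\<integral>\<^sup>+ x. e2ennreal (ll th x) \<partial>M) < \<infinity>"
  proof -
    have "(\<integral>\<^sup>+ x. e2ennreal (ll th x) \<partial>M) \<le> (\<integral>\<^sup>+ x. ennreal C \<partial>M)"
    proof (rule nn_integral_mono)
      fix x
      have "ll th x \<le> ereal C" using flow[of "e0" x] bound[of e0 x] e0 by (auto intro: order_trans)
      then show "e2ennreal (ll th x) \<le> ennreal C" using e2ennreal_mono by fastforce
    qed
    then show ?thesis using intC by (auto intro: le_less_trans)
  qed
  have P: "((\<lambda>e. \<integral>\<^sup>+ x. e2ennreal (f e x) \<partial>M) \<longlongrightarrow> (\<integral>\<^sup>+ x. e2ennreal (ll th x) \<partial>M)) (at_right 0)"
  proof (rule tendsto_at_right_sequentially[OF e0])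
    fix S :: "nat \<Rightarrow> real"
    assume S: "\<And>n. 0 < S n" "\<And>n. S n < e0" "decseq S" "S \<longlonglongrightarrow> 0"
    have Sr: "filterlim S (at_right 0) sequentially"
      using S by (intro tendsto_imp_filterlim_at_right) auto
    define u where "u n x = e2ennreal (f (S n) x)" for n x
    have du: "decseq u"
    proof (rule decseq_SucI, rule le_funI)
      fix n x show "u (Suc n) x \<le> u n x"
        unfolding u_def using decseq_SucD[OF S(3), of n] by (intro e2ennreal_mono fmono)
    qed
    have mu: "u n \<in> borel_measurable M" for n
      unfolding u_def using meas_f by measurable
    have fu: "(\<integral>\<^sup>+ x. u n x \<partial>M) < \<infinity>" for n
    proof -
      have "(\<integral>\<^sup>+ x. u n x \<partial>M) \<le> (\<integral>\<^sup>+ x. ennreal C \<partial>M)"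
      proof (rule nn_integral_mono)
        fix x
        have "f (S n) x \<le> ereal C" using bound[of "S n" x] S(2)[of n] by simp
        then show "u n x \<le> ennreal C" unfolding u_def using e2ennreal_mono by fastforce
      qed
      then show ?thesis using intC by (auto intro: le_less_trans)
    qed
    have lim_u: "(INF n. u n x) = e2ennreal (ll th x)" for x
    proof -
      have "(\<lambda>n. u n x) \<longlonglongrightarrow> e2ennreal (ll th x)"
        unfolding u_def by (intro tendsto_e2ennrealI filterlim_compose[OF ptw Sr])
      moreover have "(\<lambda>n. u n x) \<longlonglongrightarrow> (INF n. u n x)"
        by (rule LIMSEQ_INF, rule decseq_SucI) (use decseq_SucD[OF du] in \<open>auto simp: le_fun_def\<close>)
      ultimately show ?thesis using LIMSEQ_unique by blast
    qed
    have I: "(\<integral>\<^sup>+ x. (INF n. u n x) \<partial>M) = (INF n. integral\<^sup>N M (u n))"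
      by (rule nn_integral_monotone_convergence_INF_decseq[OF du mu fu])
    have L: "(\<lambda>n. integral\<^sup>N M (u n)) \<longlonglongrightarrow> (INF n. integral\<^sup>N M (u n))"
      by (rule LIMSEQ_INF, rule decseq_SucI) (use decseq_SucD[OF du] in \<open>auto intro!: nn_integral_mono simp: le_fun_def\<close>)
    show "(\<lambda>n. \<integral>\<^sup>+ x. e2ennreal (f (S n) x) \<partial>M) \<longlonglongrightarrow> (\<integral>\<^sup>+ x. e2ennreal (ll th x) \<partial>M)"
      using L unfolding I[symmetric] lim_u unfolding u_def .
  qed
  have N: "((\<lambda>e. \<integral>\<^sup>+ x. e2ennreal (- f e x) \<partial>M) \<longlongrightarrow> (\<integral>\<^sup>+ x. e2ennreal (- ll th x) \<partial>M)) (at_right 0)"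
  proof (rule tendsto_at_right_sequentially[OF e0])
    fix S :: "nat \<Rightarrow> real"
    assume S: "\<And>n. 0 < S n" "\<And>n. S n < e0" "decseq S" "S \<longlonglongrightarrow> 0"
    have Sr: "filterlim S (at_right 0) sequentially"
      using S by (intro tendsto_imp_filterlim_at_right) auto
    define u where "u n x = e2ennreal (- f (S n) x)" for n x
    have du: "incseq u"
    proof (rule incseq_SucI, rule le_funI)
      fix n x show "u n x \<le> u (Suc n) x"
        unfolding u_def using decseq_SucD[OF S(3), of n] by (intro e2ennreal_mono ereal_minus_le_minus[THEN iffD2] fmono)
    qed
    have mu: "u n \<in> borel_measurable M" for n
      unfolding u_def using meas_f by measurable
    have lim_u: "(SUP n. u n x) = e2ennreal (- ll th x)" for x
    proof -
      have "(\<lambda>n. u n x) \<longlonglongrightarrow> e2ennreal (- ll th x)"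
        unfolding u_def by (intro tendsto_e2ennrealI tendsto_uminus_ereal filterlim_compose[OF ptw Sr])
      moreover have "(\<lambda>n. u n x) \<longlonglongrightarrow> (SUP n. u n x)"
        by (rule LIMSEQ_SUP, rule incseq_SucI) (use incseq_SucD[OF du] in \<open>auto simp: le_fun_def\<close>)
      ultimately show ?thesis using LIMSEQ_unique by blast
    qed
    have I: "(\<integral>\<^sup>+ x. (SUP n. u n x) \<partial>M) = (SUP n. integral\<^sup>N M (u n))"
      by (rule nn_integral_monotone_convergence_SUP[OF du mu])
    have L: "(\<lambda>n. integral\<^sup>N M (u n)) \<longlonglongrightarrow> (SUP n. integral\<^sup>N M (u n))"
      by (rule LIMSEQ_SUP, rule incseq_SucI) (use incseq_SucD[OF du] in \<open>auto intro!: nn_integral_mono simp: le_fun_def\<close>)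
    show "(\<lambda>n. \<integral>\<^sup>+ x. e2ennreal (- f (S n) x) \<partial>M) \<longlonglongrightarrow> (\<integral>\<^sup>+ x. e2ennreal (- ll th x) \<partial>M)"
      using L unfolding I[symmetric] lim_u unfolding u_def .
  qed
  have "((\<lambda>e. enn2ereal (\<integral>\<^sup>+ x. e2ennreal (f e x) \<partial>M) - enn2ereal (\<integral>\<^sup>+ x. e2ennreal (- f e x) \<partial>M))
     \<longlongrightarrow> enn2ereal (\<integral>\<^sup>+ x. e2ennreal (ll th x) \<partial>M) - enn2ereal (\<integral>\<^sup>+ x. e2ennreal (- ll th x) \<partial>M)) (at_right 0)"
  proof (rule tendsto_diff_ereal_general)
    show "((\<lambda>e. enn2ereal (\<integral>\<^sup>+ x. e2ennreal (f e x) \<partial>M)) \<longlongrightarrow> enn2ereal (\<integral>\<^sup>+ x. e2ennreal (ll th x) \<partial>M)) (at_right 0)"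
      using P by (rule tendsto_enn2erealI)
    show "((\<lambda>e. enn2ereal (\<integral>\<^sup>+ x. e2ennreal (- f e x) \<partial>M)) \<longlongrightarrow> enn2ereal (\<integral>\<^sup>+ x. e2ennreal (- ll th x) \<partial>M)) (at_right 0)"
      using N by (rule tendsto_enn2erealI)
    have "enn2ereal (\<integral>\<^sup>+ x. e2ennreal (ll th x) \<partial>M) \<noteq> \<infinity>"
      using P0fin by (simp add: less_top)
    moreover have "enn2ereal (\<integral>\<^sup>+ x. e2ennreal (- ll th x) \<partial>M) \<noteq> - \<infinity>"
      using enn2ereal_nonneg[of "\<integral>\<^sup>+ x. e2ennreal (- ll th x) \<partial>M"] by auto
    ultimately show "\<not> ((enn2ereal (\<integral>\<^sup>+ x. e2ennreal (ll th x) \<partial>M) = \<infinity> \<and> enn2ereal (\<integral>\<^sup>+ x. e2ennreal (- ll th x) \<partial>M) = \<infinity>) \<or>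
        (enn2ereal (\<integral>\<^sup>+ x. e2ennreal (ll th x) \<partial>M) = - \<infinity> \<and> enn2ereal (\<integral>\<^sup>+ x. e2ennreal (- ll th x) \<partial>M) = - \<infinity>))"
      by blast
  qed
  then show ?thesis by (simp add: ereal_integral_def M_def f_def)
qed

end
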